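(* Let $x\in\mathcal X$. If $T(x)\ge 1-\alpha$, then $\mathcal U_x(\mu)\ge 0$ for all $\mu\ge 0$. Otherwise, $\mu\mapsto\mathcal U_x(\mu)$ is decreasing on $[0,\infty)$.
   Context: Let $(X,Y)\sim P_{XY}$ on $\mathcal X\times\mathcal Y$, $\alpha\in(0,1)$, $\mathcal I$ a finite collection of subsets of $\mathcal Y$, $w:\mathcal I\to(0,B)$ a bounded positive weight. For $C\in\mathcal I$ let $p_C(x)=\mathbb P(Y\in C\mid X=x)$, $\ell_{x,C}(\mu)=w(C)p_C(x)+\mu(p_C(x)-(1-\alpha))$ for $\mu\ge0$, $\mathcal U_x(\mu)=\max_{C\in\mathcal I}\ell_{x,C}(\mu)$, and $T(x)=\max_{C\in\mathcal I}p_C(x)$. *)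

theory Defs
  imports "HOL-Probability.Probability"
begin

text \<open>The conditional law of Y given X = x is represented by a kernel
  K :: 'x => 'y measure (a regular conditional distribution), so that
  p_C(x) = P(Y in C | X = x) = measure (K x) C.\<close>

definition pC :: "('x \<Rightarrow> 'y measure) \<Rightarrow> 'y set \<Rightarrow> 'x \<Rightarrow> real" where
  "pC K C x = measure (K x) C"

definition ell :: "('x \<Rightarrow> 'y measure) \<Rightarrow> ('y set \<Rightarrow> real) \<Rightarrow> real \<Rightarrow> 'x \<Rightarrow> 'y set \<Rightarrow> real \<Rightarrow> real" where
  "ell K w \<alpha> x C \<mu> = w C * pC K C x + \<mu> * (pC K C x - (1 - \<alpha>))"

definition U :: "('x \<Rightarrow> 'y measure) \<Rightarrow> ('y set \<Rightarrow> real) \<Rightarrow> real \<Rightarrow> 'y set set \<Rightarrow> 'x \<Rightarrow> real \<Rightarrow> real" where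
  "U K w \<alpha> \<I> x \<mu> = Max ((\<lambda>C. ell K w \<alpha> x C \<mu>) ` \<I>)"

definition T :: "('x \<Rightarrow> 'y measure) \<Rightarrow> 'y set set \<Rightarrow> 'x \<Rightarrow> real" where
  "T K \<I> x = Max ((\<lambda>C. pC K C x) ` \<I>)"

end

theory Submission
  imports Defs
begin

theorem lemma2:
  fixes K :: "'x \<Rightarrow> 'y measure" and w :: "'y set \<Rightarrow> real"
    and \<I> :: "'y set set" and \<alpha> B :: real and x :: 'x
  assumes K_prob: "\<And>x. prob_space (K x)"
    and I_meas: "\<And>x. \<I> \<subseteq> sets (K x)"
    and alpha: "0 < \<alpha>" "\<alpha> < 1"
    and I_fin: "finite \<I>" and I_ne: "\<I> \<noteq> {}"
    and w_bd: "\<And>C. C \<in> \<I> \<Longrightarrow> 0 < w C \<and> w C < B"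
  shows "(T K \<I> x \<ge> 1 - \<alpha> \<longrightarrow> (\<forall>\<mu>\<ge>0. U K w \<alpha> \<I> x \<mu> \<ge> 0))
       \<and> (T K \<I> x < 1 - \<alpha> \<longrightarrow>
            (\<forall>\<mu>1 \<mu>2. 0 \<le> \<mu>1 \<and> \<mu>1 < \<mu>2 \<longrightarrow> U K w \<alpha> \<I> x \<mu>2 < U K w \<alpha> \<I> x \<mu>1))"
proof (intro conjI impI allI)
  have fin1: "finite ((\<lambda>C. pC K C x) ` \<I>)" using I_fin by simp
  have fin2: "\<And>\<mu>. finite ((\<lambda>C. ell K w \<alpha> x C \<mu>) ` \<I>)" using I_fin by simp
  have Uge: "\<And>C \<mu>. C \<in> \<I> \<Longrightarrow> ell K w \<alpha> x C \<mu> \<le> U K w \<alpha> \<I> x \<mu>"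
    unfolding U_def using fin2 by (intro Max_ge) auto
  have Uatt: "\<And>\<mu>. \<exists>C\<in>\<I>. U K w \<alpha> \<I> x \<mu> = ell K w \<alpha> x C \<mu>"
  proof -
    fix \<mu>
    have "U K w \<alpha> \<I> x \<mu> \<in> (\<lambda>C. ell K w \<alpha> x C \<mu>) ` \<I>"
      unfolding U_def using fin2 I_ne by (intro Max_in) auto
    then show "\<exists>C\<in>\<I>. U K w \<alpha> \<I> x \<mu> = ell K w \<alpha> x C \<mu>" by auto
  qed
  have Tge: "\<And>C. C \<in> \<I> \<Longrightarrow> pC K C x \<le> T K \<I> x"
    unfolding T_def using fin1 by (intro Max_ge) auto
  have Tatt: "\<exists>C\<in>\<I>. T K \<I> x = pC K C x"
  proof -
    have "T K \<I> x \<in> (\<lambda>C. pC K C x) ` \<I>"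
      unfolding T_def using fin1 I_ne by (intro Max_in) auto
    then show ?thesis by auto
  qed
  have pnn: "\<And>C. 0 \<le> pC K C x" unfolding pC_def by simp
  {
    fix \<mu> :: real
    assume T1: "T K \<I> x \<ge> 1 - \<alpha>" and m: "0 \<le> \<mu>"
    obtain C where C: "C \<in> \<I>" "T K \<I> x = pC K C x" using Tatt by blast
    have "0 \<le> w C * pC K C x" using w_bd[OF C(1)] pnn[of C] by simp
    moreover have "0 \<le> \<mu> * (pC K C x - (1 - \<alpha>))" using T1 C m by simp
    ultimately have "0 \<le> ell K w \<alpha> x C \<mu>" unfolding ell_def by linarith
    then show "0 \<le> U K w \<alpha> \<I> x \<mu>" using Uge[OF C(1), of \<mu>] by linarith
  }
  {
    fix \<mu>1 \<mu>2 :: real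
    assume T1: "T K \<I> x < 1 - \<alpha>" and m: "0 \<le> \<mu>1 \<and> \<mu>1 < \<mu>2"
    obtain C where C: "C \<in> \<I>" "U K w \<alpha> \<I> x \<mu>2 = ell K w \<alpha> x C \<mu>2" using Uatt by blast
    have neg: "pC K C x - (1 - \<alpha>) < 0" using Tge[OF C(1)] T1 by linarith
    have "\<mu>2 * (pC K C x - (1 - \<alpha>)) < \<mu>1 * (pC K C x - (1 - \<alpha>))"
      using m neg by (simp add: mult_strict_right_mono_neg)
    then have "ell K w \<alpha> x C \<mu>2 < ell K w \<alpha> x C \<mu>1" unfolding ell_def by linarith
    then show "U K w \<alpha> \<I> x \<mu>2 < U K w \<alpha> \<I> x \<mu>1" using C Uge[OF C(1), of \<mu>1] by linarith
  }
qed

end
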